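(* Let $n\ge k\ge1$, $l\ge0$, $d=2^n$, $\gamma=3/4$, $\nu=1/2$, and $$\alpha_k=\frac{d^2(d+3)(d\gamma^k+3\nu^k)-4(d+1)(d+2)}{(d^2-1)(d+2)(d+4)},\qquad \beta_k=\frac{d^2(d^2\gamma^k-4)+4}{(d^2-1)(d^2-4)},$$ where for $n=1$ the value of $\beta_1$ is understood as the limit $d\to2$ of the formula $\beta_1=\frac{3d^2-4}{4(d^2-1)}$ (i.e. $\beta_1=\frac{3d^2-4}{4(d^2-1)}$ in general). Then $\alpha_k$ and $\beta_k$ are monotonically increasing in $d$ (over $d=2^n$, $n\ge k$) and monotonically decreasing in $k$; $\lim_{d\to\infty}\alpha_k=\lim_{d\to\infty}\beta_k=\gamma^k$; $0<\alpha_k<\gamma^k$ and $0<\beta_k<\gamma^k$; and $$\gamma^{kl}\Bigl[1-\frac{kl(3d+1)}{3(d^2-1)}\Bigr]\le\alpha_1^{kl}\le\alpha_k^l\le\beta_k^l\le\beta_1^{kl}\le\alpha_1^{kl}+\frac{kld}{d^2-1}\gamma^{kl}.$$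
   Context: Note that $\alpha_1=\frac{3d^2-3d-4}{4(d^2-1)}$ and $\beta_1=\frac{3d^2-4}{4(d^2-1)}$. *)

theory Defs
  imports Complex_Main
begin

definition gam :: real where "gam = 3/4"
definition nuu :: real where "nuu = 1/2"

definition dim :: "nat \<Rightarrow> real" where "dim n = 2 ^ n"

definition alph :: "nat \<Rightarrow> nat \<Rightarrow> real" where
  "alph n k = (let d = dim n in
     (d^2 * (d + 3) * (d * gam ^ k + 3 * nuu ^ k) - 4 * (d + 1) * (d + 2))
     / ((d^2 - 1) * (d + 2) * (d + 4)))"

text \<open>For k = 1 the formula is replaced by its simplified form
  (3d^2 - 4)/(4(d^2 - 1)), which agrees with the general one for d \<noteq> 2
  and gives the limit value at d = 2 (n = 1).\<close>
definition bet :: "nat \<Rightarrow> nat \<Rightarrow> real" where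
  "bet n k = (let d = dim n in
     if k = 1 then (3 * d^2 - 4) / (4 * (d^2 - 1))
     else (d^2 * (d^2 * gam ^ k - 4) + 4) / ((d^2 - 1) * (d^2 - 4)))"

end

theory Submission
  imports Defs
begin

lemma polyA:
  fixes d :: real assumes h: "2 \<le> d"
  shows "((4 * (d + 1)) * (d + 2)) < ((d * (d + 3)) * (((3/2) * d) + 3))"
proof -
  define t where "t = d - 2"
  have t: "0 \<le> t" using h by (simp add: t_def)
  have d: "d = t + 2" by (simp add: t_def)
  have e: "((d * (d + 3)) * (((3/2) * d) + 3)) - ((4 * (d + 1)) * (d + 2)) = 12 + t*(29 + t*((25/2) + t*((3/2))))"
    unfolding d by algebra
  have "0 < ((d * (d + 3)) * (((3/2) * d) + 3)) - ((4 * (d + 1)) * (d + 2))" unfolding e using t by (intro add_nonneg_nonneg add_pos_nonneg mult_nonneg_nonneg) auto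
  then show ?thesis by linarith
qed

lemma polyF1:
  fixes d :: real assumes h: "4 \<le> d"
  shows "(((3 * ((2 * d) * (2 * d))) * ((2 * d) + 3)) * ((((d * d) - 1) * (d + 2)) * (d + 4))) \<le> (((3 * (d * d)) * (d + 3)) * (((((2 * d) * (2 * d)) - 1) * ((2 * d) + 2)) * ((2 * d) + 4)))"
proof -
  define t where "t = d - 4"
  have t: "0 \<le> t" using h by (simp add: t_def)
  have d: "d = t + 4" by (simp add: t_def)
  have e: "(((3 * (d * d)) * (d + 3)) * (((((2 * d) * (2 * d)) - 1) * ((2 * d) + 2)) * ((2 * d) + 4))) - (((3 * ((2 * d) * (2 * d))) * ((2 * d) + 3)) * ((((d * d) - 1) * (d + 2)) * (d + 4))) = 1019520 + t*(1563264 + t*(1029192 + t*(376404 + t*(82428 + t*(10788 + t*(780 + t*(24)))))))"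
    unfolding d by algebra
  have "0 \<le> (((3 * (d * d)) * (d + 3)) * (((((2 * d) * (2 * d)) - 1) * ((2 * d) + 2)) * ((2 * d) + 4))) - (((3 * ((2 * d) * (2 * d))) * ((2 * d) + 3)) * ((((d * d) - 1) * (d + 2)) * (d + 4)))" unfolding e using t by (intro add_nonneg_nonneg add_pos_nonneg mult_nonneg_nonneg) auto
  then show ?thesis by linarith
qed

lemma polyF2:
  fixes d :: real assumes h: "4 \<le> d"
  shows "(((((d * d) * d) * (d + 3)) + ((4/9) * ((3 * (d * d)) * (d + 3)))) * (((((2 * d) * (2 * d)) - 1) * ((2 * d) + 2)) * ((2 * d) + 4))) \<le> ((((((2 * d) * (2 * d)) * (2 * d)) * ((2 * d) + 3)) + ((4/9) * ((3 * ((2 * d) * (2 * d))) * ((2 * d) + 3)))) * ((((d * d) - 1) * (d + 2)) * (d + 4)))"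
proof -
  define t where "t = d - 4"
  have t: "0 \<le> t" using h by (simp add: t_def)
  have d: "d = t + 4" by (simp add: t_def)
  have e: "((((((2 * d) * (2 * d)) * (2 * d)) * ((2 * d) + 3)) + ((4/9) * ((3 * ((2 * d) * (2 * d))) * ((2 * d) + 3)))) * ((((d * d) - 1) * (d + 2)) * (d + 4))) - (((((d * d) * d) * (d + 3)) + ((4/9) * ((3 * (d * d)) * (d + 3)))) * (((((2 * d) * (2 * d)) - 1) * ((2 * d) + 2)) * ((2 * d) + 4))) = 215040 + t*(443008 + t*((1072000/3) + t*((454360/3) + t*((111172/3) + t*((15856/3) + t*((1228/3) + t*((40/3))))))))"
    unfolding d by algebra
  have "0 \<le> ((((((2 * d) * (2 * d)) * (2 * d)) * ((2 * d) + 3)) + ((4/9) * ((3 * ((2 * d) * (2 * d))) * ((2 * d) + 3)))) * ((((d * d) - 1) * (d + 2)) * (d + 4))) - (((((d * d) * d) * (d + 3)) + ((4/9) * ((3 * (d * d)) * (d + 3)))) * (((((2 * d) * (2 * d)) - 1) * ((2 * d) + 2)) * ((2 * d) + 4)))" unfolding e using t by (intro add_nonneg_nonneg add_pos_nonneg mult_nonneg_nonneg) auto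
  then show ?thesis by linarith
qed

lemma polyF3:
  fixes d :: real assumes h: "2 \<le> d"
  shows "(((4 * ((2 * d) + 1)) * ((2 * d) + 2)) * ((((d * d) - 1) * (d + 2)) * (d + 4))) \<le> (((4 * (d + 1)) * (d + 2)) * (((((2 * d) * (2 * d)) - 1) * ((2 * d) + 2)) * ((2 * d) + 4)))"
proof -
  define t where "t = d - 2"
  have t: "0 \<le> t" using h by (simp add: t_def)
  have d: "d = t + 2" by (simp add: t_def)
  have e: "(((4 * (d + 1)) * (d + 2)) * (((((2 * d) * (2 * d)) - 1) * ((2 * d) + 2)) * ((2 * d) + 4))) - (((4 * ((2 * d) + 1)) * ((2 * d) + 2)) * ((((d * d) - 1) * (d + 2)) * (d + 4))) = 25920 + t*(55728 + t*(49464 + t*(23208 + t*(6072 + t*(840 + t*(48))))))"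
    unfolding d by algebra
  have "0 \<le> (((4 * (d + 1)) * (d + 2)) * (((((2 * d) * (2 * d)) - 1) * ((2 * d) + 2)) * ((2 * d) + 4))) - (((4 * ((2 * d) + 1)) * ((2 * d) + 2)) * ((((d * d) - 1) * (d + 2)) * (d + 4)))" unfolding e using t by (intro add_nonneg_nonneg add_pos_nonneg mult_nonneg_nonneg) auto
  then show ?thesis by linarith
qed

lemma polyH1:
  fixes d :: real assumes h: "2 \<le> d"
  shows "(((((3 * d) * d) - (3 * d)) - 4) * (4 * (((2 * d) * (2 * d)) - 1))) \<le> (((((3 * (2 * d)) * (2 * d)) - (3 * (2 * d))) - 4) * (4 * ((d * d) - 1)))"
proof -
  define t where "t = d - 2"
  have t: "0 \<le> t" using h by (simp add: t_def)
  have d: "d = t + 2" by (simp add: t_def)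
  have e: "(((((3 * (2 * d)) * (2 * d)) - (3 * (2 * d))) - 4) * (4 * ((d * d) - 1))) - (((((3 * d) * d) - (3 * d)) - 4) * (4 * (((2 * d) * (2 * d)) - 1))) = 264 + t*(348 + t*(156 + t*(24)))"
    unfolding d by algebra
  have "0 \<le> (((((3 * (2 * d)) * (2 * d)) - (3 * (2 * d))) - 4) * (4 * ((d * d) - 1))) - (((((3 * d) * d) - (3 * d)) - 4) * (4 * (((2 * d) * (2 * d)) - 1)))" unfolding e using t by (intro add_nonneg_nonneg add_pos_nonneg mult_nonneg_nonneg) auto
  then show ?thesis by linarith
qed

lemma polyG1:
  fixes d :: real assumes h: "4 \<le> d"
  shows "(((((2 * d) * (2 * d)) * (2 * d)) * (2 * d)) * (((d * d) - 1) * ((d * d) - 4))) \<le> ((((d * d) * d) * d) * ((((2 * d) * (2 * d)) - 1) * (((2 * d) * (2 * d)) - 4)))"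
proof -
  define t where "t = d - 4"
  have t: "0 \<le> t" using h by (simp add: t_def)
  have d: "d = t + 4" by (simp add: t_def)
  have e: "((((d * d) * d) * d) * ((((2 * d) * (2 * d)) - 1) * (((2 * d) * (2 * d)) - 4))) - (((((2 * d) * (2 * d)) * (2 * d)) * (2 * d)) * (((d * d) - 1) * ((d * d) - 4))) = 230400 + t*(353280 + t*(224640 + t*(75840 + t*(14340 + t*(1440 + t*(60))))))"
    unfolding d by algebra
  have "0 \<le> ((((d * d) * d) * d) * ((((2 * d) * (2 * d)) - 1) * (((2 * d) * (2 * d)) - 4))) - (((((2 * d) * (2 * d)) * (2 * d)) * (2 * d)) * (((d * d) - 1) * ((d * d) - 4)))" unfolding e using t by (intro add_nonneg_nonneg add_pos_nonneg mult_nonneg_nonneg) auto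
  then show ?thesis by linarith
qed

lemma polyG2:
  fixes d :: real assumes h: "4 \<le> d"
  shows "((((d * d) * (((d * d) * (9/16)) - 4)) + 4) * ((((2 * d) * (2 * d)) - 1) * (((2 * d) * (2 * d)) - 4))) \<le> (((((2 * d) * (2 * d)) * ((((2 * d) * (2 * d)) * (9/16)) - 4)) + 4) * (((d * d) - 1) * ((d * d) - 4)))"
proof -
  define t where "t = d - 4"
  have t: "0 \<le> t" using h by (simp add: t_def)
  have d: "d = t + 4" by (simp add: t_def)
  have e: "(((((2 * d) * (2 * d)) * ((((2 * d) * (2 * d)) * (9/16)) - 4)) + 4) * (((d * d) - 1) * ((d * d) - 4))) - ((((d * d) * (((d * d) * (9/16)) - 4)) + 4) * ((((2 * d) * (2 * d)) - 1) * (((2 * d) * (2 * d)) - 4))) = 51840 + t*(80928 + t*(52212 + t*(17820 + t*((13575/4) + t*(342 + t*((57/4)))))))"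
    unfolding d by algebra
  have "0 \<le> (((((2 * d) * (2 * d)) * ((((2 * d) * (2 * d)) * (9/16)) - 4)) + 4) * (((d * d) - 1) * ((d * d) - 4))) - ((((d * d) * (((d * d) * (9/16)) - 4)) + 4) * ((((2 * d) * (2 * d)) - 1) * (((2 * d) * (2 * d)) - 4)))" unfolding e using t by (intro add_nonneg_nonneg add_pos_nonneg mult_nonneg_nonneg) auto
  then show ?thesis by linarith
qed

lemma polyH2:
  fixes d :: real assumes h: "2 \<le> d"
  shows "((((3 * d) * d) - 4) * (4 * (((2 * d) * (2 * d)) - 1))) \<le> ((((3 * (2 * d)) * (2 * d)) - 4) * (4 * ((d * d) - 1)))"
proof -
  define t where "t = d - 2"
  have t: "0 \<le> t" using h by (simp add: t_def)
  have d: "d = t + 2" by (simp add: t_def)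
  have e: "((((3 * (2 * d)) * (2 * d)) - 4) * (4 * ((d * d) - 1))) - ((((3 * d) * d) - 4) * (4 * (((2 * d) * (2 * d)) - 1))) = 48 + t*(48 + t*(12))"
    unfolding d by algebra
  have "0 \<le> ((((3 * (2 * d)) * (2 * d)) - 4) * (4 * ((d * d) - 1))) - ((((3 * d) * d) - 4) * (4 * (((2 * d) * (2 * d)) - 1)))" unfolding e using t by (intro add_nonneg_nonneg add_pos_nonneg mult_nonneg_nonneg) auto
  then show ?thesis by linarith
qed

lemma polyE1:
  fixes d :: real assumes h: "4 \<le> d"
  shows "0 \<le> (((((d * d) * ((3 * d) + 1)) * (3/4)) - (((3 * d) * (((d * d) - (3 * d)) - 2)) * (1/2))) - ((4 * (d + 1)) * (d + 2)))"
proof -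
  define t where "t = d - 4"
  have t: "0 \<le> t" using h by (simp add: t_def)
  have d: "d = t + 4" by (simp add: t_def)
  have e: "(((((d * d) * ((3 * d) + 1)) * (3/4)) - (((3 * d) * (((d * d) - (3 * d)) - 2)) * (1/2))) - ((4 * (d + 1)) * (d + 2))) - 0 = 24 + t*(37 + t*((41/4) + t*((3/4))))"
    unfolding d by algebra
  have "0 \<le> (((((d * d) * ((3 * d) + 1)) * (3/4)) - (((3 * d) * (((d * d) - (3 * d)) - 2)) * (1/2))) - ((4 * (d + 1)) * (d + 2))) - 0" unfolding e using t by (intro add_nonneg_nonneg add_pos_nonneg mult_nonneg_nonneg) auto
  then show ?thesis by linarith
qed


definition Pd :: "real \<Rightarrow> real" where "Pd d = (d^2-1)*(d+2)*(d+4)"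
definition aF :: "real \<Rightarrow> real \<Rightarrow> real \<Rightarrow> real" where
  "aF d x y = (d^2*(d+3)*(d*x+3*y) - 4*(d+1)*(d+2)) / Pd d"
definition bF :: "real \<Rightarrow> real \<Rightarrow> real" where
  "bF d x = (d^2*(d^2*x-4)+4)/((d^2-1)*(d^2-4))"
definition b1 :: "real \<Rightarrow> real" where "b1 d = (3*d^2-4)/(4*(d^2-1))"

lemma alph_eq: "alph n k = aF (dim n) (gam^k) (nuu^k)"
  by (simp add: alph_def aF_def Pd_def Let_def)
lemma bet_eq: "bet n k = (if k = 1 then b1 (dim n) else bF (dim n) (gam^k))"
  by (simp add: bet_def bF_def b1_def Let_def)

lemma frac_eqI: "b \<noteq> 0 \<Longrightarrow> e \<noteq> 0 \<Longrightarrow> a*e = c*b \<Longrightarrow> a/b = (c::real)/e"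
  by (simp add: frac_eq_eq)
lemma frac_leI: "0 < b \<Longrightarrow> 0 < e \<Longrightarrow> a*e \<le> c*b \<Longrightarrow> a/b \<le> (c::real)/e"
  by (simp add: divide_simps mult.commute)
lemma frac_ltI: "0 < b \<Longrightarrow> 0 < e \<Longrightarrow> a*e < c*b \<Longrightarrow> a/b < (c::real)/e"
  by (simp add: divide_simps mult.commute)

lemma Pd_pos: "2 \<le> d \<Longrightarrow> 0 < Pd d"
proof -
  assume "2 \<le> d"
  then have "4 \<le> d^2" using power_mono[of 2 d 2] by simp
  then show ?thesis unfolding Pd_def using \<open>2 \<le> d\<close> by (intro mult_pos_pos) auto
qed

lemma Q_pos: "4 \<le> d \<Longrightarrow> 0 < (d^2-1)*(d^2-(4::real))"
proof -
  assume h: "4 \<le> d"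
  have "16 \<le> d^2" using h power_mono[of 4 d 2] by simp
  then show ?thesis by (intro mult_pos_pos) auto
qed

lemma b1_bF: "4 \<le> d \<Longrightarrow> b1 d = bF d (3/4)"
proof -
  assume h: "4 \<le> d"
  have "16 \<le> d^2" using h power_mono[of 4 d 2] by simp
  then have "d^2 - 1 \<noteq> 0" "d^2 - 4 \<noteq> 0" by auto
  have e: "d^2*(d^2*(3/4)-4)+4 = (3*d^2-4)*(d^2-4)/4" by algebra
  have nz: "(d^2-1)*(d^2-4) \<noteq> 0" using \<open>d^2 - 4 \<noteq> 0\<close> \<open>d^2 - 1 \<noteq> 0\<close> by simp
  show ?thesis unfolding b1_def bF_def e using \<open>d^2 - 1 \<noteq> 0\<close> nz
    by (intro frac_eqI) (auto simp: algebra_simps)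
qed

lemma a1_eq: "2 \<le> d \<Longrightarrow> aF d (3/4) (1/2) = (3*d^2-3*d-4)/(4*(d^2-1))"
proof -
  assume h: "2 \<le> d"
  have "4 \<le> d^2" using h power_mono[of 2 d 2] by simp
  then have "d^2 - 1 \<noteq> 0" "d+2 \<noteq> 0" "d+4 \<noteq> 0" using h by auto
  then show ?thesis unfolding aF_def Pd_def by (intro frac_eqI) (auto, algebra)
qed

lemma dim_Suc: "dim (Suc n) = 2 * dim n" by (simp add: dim_def)

lemma dy: "k \<le> n \<Longrightarrow> dim n * nuu^k = 2^(n-k)"
proof -
  assume "k \<le> n"
  then have "(2::real)^n = 2^(n-k) * 2^k" by (simp add: power_add[symmetric])
  then show ?thesis by (simp add: dim_def nuu_def power_one_over)
qed

lemma gxy: "gam^k = (3/2)^k * nuu^k"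
  by (simp add: gam_def nuu_def power_mult_distrib[symmetric])

lemma basics:
  assumes "1 \<le> k" "k \<le> n"
  shows "2 \<le> dim n" "1 \<le> dim n * nuu^k" "0 < gam^k" "gam^k \<le> 3/4" "0 < nuu^k"
    "(3/2)*nuu^k \<le> gam^k" "3/2 \<le> dim n * gam^k"
proof -
  have "(2::real)^1 \<le> 2^n" using assms by (intro power_increasing) auto
  then show "2 \<le> dim n" by (simp add: dim_def)
  show d1: "1 \<le> dim n * nuu^k" using dy[OF assms(2)] by simp
  show "0 < gam^k" "0 < nuu^k" by (auto simp: gam_def nuu_def)
  have "gam^k \<le> gam^1" using assms by (intro power_decreasing) (auto simp: gam_def)
  then show "gam^k \<le> 3/4" by (simp add: gam_def)
  have p: "(3/2::real)^1 \<le> (3/2)^k" using assms by (intro power_increasing) auto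
  show "(3/2)*nuu^k \<le> gam^k" unfolding gxy using p by (intro mult_right_mono) (auto simp: nuu_def)
  have "dim n * gam^k = (3/2)^k * (dim n * nuu^k)" unfolding gxy by simp
  also have "\<dots> \<ge> 3/2 * 1" using p d1 by (intro mult_mono) auto
  finally show "3/2 \<le> dim n * gam^k" by simp
qed

lemma basics2:
  assumes "2 \<le> k" "k \<le> n"
  shows "4 \<le> dim n" "gam^k \<le> 9/16" "(9/4)*nuu^k \<le> gam^k"
proof -
  have "(2::real)^2 \<le> 2^n" using assms by (intro power_increasing) auto
  then show "4 \<le> dim n" by (simp add: dim_def)
  have "gam^k \<le> gam^2" using assms by (intro power_decreasing) (auto simp: gam_def)
  then show "gam^k \<le> 9/16" by (simp add: gam_def power2_eq_square)
  have p: "(3/2::real)^2 \<le> (3/2)^k" using assms by (intro power_increasing) auto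
  show "(9/4)*nuu^k \<le> gam^k" unfolding gxy using p by (intro mult_right_mono) (auto simp: nuu_def power2_eq_square)
qed

lemma basics3:
  assumes "Suc k \<le> n" "1 \<le> k"
  shows "2 \<le> dim n * nuu^k" "4 \<le> dim n"
proof -
  have "(2::real)^1 \<le> 2^(n-k)" using assms by (intro power_increasing) auto
  then show "2 \<le> dim n * nuu^k" using dy[of k n] assms by simp
  have "(2::real)^2 \<le> 2^n" using assms by (intro power_increasing) auto
  then show "4 \<le> dim n" by (simp add: dim_def)
qed



lemma aF_pos:
  assumes d: "2 \<le> d" and x: "3/2 \<le> d*x" and y: "1 \<le> d*y"
  shows "0 < aF d x y"
proof -
  have e: "d^2*(d+3)*(d*x+3*y) = (d*(d+3))*(d*(d*x) + 3*(d*y))" by algebra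
  have "d*(3/2) + 3*1 \<le> d*(d*x) + 3*(d*y)" using d x y by (intro add_mono mult_left_mono) auto
  then have "(d*(d+3))*(3/2*d + 3) \<le> (d*(d+3))*(d*(d*x) + 3*(d*y))" using d
    by (intro mult_left_mono) (auto simp: algebra_simps)
  then have "(d * (d + 3)) * ((3/2) * d + 3) \<le> d^2*(d+3)*(d*x+3*y)" by (simp only: e)
  then have "4*(d+1)*(d+2) < d^2*(d+3)*(d*x+3*y)" using polyA[OF d] by linarith
  then show ?thesis unfolding aF_def using Pd_pos[OF d] by simp
qed

lemma aF_lt:
  assumes d: "2 \<le> d" and x: "0 < x" "x \<le> 3/4" and y: "0 \<le> y" "3/2*y \<le> x"
  shows "aF d x y < x"
proof -
  have id: "x*Pd d - (d^2*(d+3)*(d*x+3*y) - 4*(d+1)*(d+2))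
     = x*(d*(d+3)*(d-2)) - 8*x + ((d^2*(d+3))*(2*x) - (d^2*(d+3))*(3*y)) + 4*(d+1)*(d+2)"
    unfolding Pd_def by algebra
  have c: "0 \<le> d^2*(d+3)" using d by simp
  have h1: "(d^2*(d+3))*(3*y) \<le> (d^2*(d+3))*(2*x)" using y by (intro mult_left_mono[OF _ c]) auto
  have h2: "0 \<le> x*(d*(d+3)*(d-2))" using x d by simp
  have "12 \<le> (d+1)*(d+2)" using mult_mono[of 3 "d+1" 4 "d+2"] d by simp
  then have h3: "48 \<le> 4*(d+1)*(d+2)" by (subst mult.assoc) linarith
  have "d^2*(d+3)*(d*x+3*y) - 4*(d+1)*(d+2) < x * Pd d" using id h1 h2 h3 x by linarith
  then show ?thesis unfolding aF_def using Pd_pos[OF d] by (simp add: pos_divide_less_eq)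
qed

lemma b1_bounds: "2 \<le> d \<Longrightarrow> 0 < b1 d \<and> b1 d < 3/4"
proof -
  assume d: "2 \<le> d"
  have "4 \<le> d^2" using d power_mono[of 2 d 2] by simp
  then show ?thesis unfolding b1_def by (simp add: divide_simps)
qed

lemma bF_bounds:
  assumes d: "4 \<le> d" and x: "0 < x" "x \<le> 9/16" "3/2 \<le> d*x"
  shows "0 < bF d x \<and> bF d x < x"
proof -
  have Q: "0 < (d^2-1)*(d^2-4)" using Q_pos[OF d] .
  have "4*(3/2) \<le> d*(d*x)" using d x by (intro mult_mono) auto
  then have "2 \<le> d^2*x-4" by (simp add: power2_eq_square mult.assoc)
  then have "0 \<le> d^2*(d^2*x-4)" by simp
  then have n: "0 < d^2*(d^2*x-4)+4" by linarith
  have "16 \<le> d^2" using d power_mono[of 4 d 2] by simp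
  then have "16*(4-5*x) \<le> d^2*(4-5*x)" using x by (intro mult_right_mono) auto
  have aux: "0 < A - 4 + 4*x" if "16*(4-5*x) \<le> A" for A::real using that x by (simp add: algebra_simps)
  have p: "0 < d^2*(4-5*x) - 4 + 4*x" by (rule aux) fact
  have "x*((d^2-1)*(d^2-4)) - (d^2*(d^2*x-4)+4) = d^2*(4-5*x) - 4 + 4*x" by algebra
  then have "0 < x*((d^2-1)*(d^2-4)) - (d^2*(d^2*x-4)+4)" using p by simp
  then have "d^2*(d^2*x-4)+4 < x*((d^2-1)*(d^2-4))" by linarith
  then show ?thesis unfolding bF_def using Q n by (simp add: pos_divide_less_eq)
qed

lemma aF_le_bF:
  assumes d: "4 \<le> d" and x: "9/4*y \<le> x" and y: "0 \<le> y" "1 \<le> d*y"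
  shows "aF d x y \<le> bF d x"
proof -
  have d2: "2 \<le> d" using d by simp
  define R where "R = 5/4*d^2 + 7/2*d + 6"
  have R: "0 \<le> R" using d by (simp add: R_def)
  have h1: "9/4*y*(d^3+2*d^2) \<le> x*(d^3+2*d^2)" using x d by (intro mult_right_mono) auto
  have h2: "R \<le> (d*y)*R" using y R mult_right_mono[of 1 "d*y" R] by simp
  have "4*d \<le> d^2" using d mult_right_mono[of 4 d d] by (simp add: power2_eq_square)
  then have Rb: "4*d + 4 \<le> R" using d unfolding R_def by linarith
  have B: "0 \<le> x*(d^3+2*d^2) - d*(d^2+d-6)*y - 4*d - 4"
  proof -
    have "9/4*y*(d^3+2*d^2) - d*(d^2+d-6)*y = (d*y)*R" unfolding R_def by algebra
    then show ?thesis using h1 h2 Rb by linarith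
  qed
  have key: "(d^2*(d^2*x-4)+4)*Pd d - (d^2*(d+3)*(d*x+3*y) - 4*(d+1)*(d+2))*((d^2-1)*(d^2-4))
      = ((d^2-1)*(d+2)*(3*d)) * (x*(d^3+2*d^2) - d*(d^2+d-6)*y - 4*d - 4)"
    unfolding Pd_def by algebra
  have "16 \<le> d^2" using d power_mono[of 4 d 2] by simp
  then have "0 \<le> (d^2-1)*(d+2)*(3*d)" using d by (intro mult_nonneg_nonneg) auto
  then have KB: "0 \<le> ((d^2-1)*(d+2)*(3*d)) * (x*(d^3+2*d^2) - d*(d^2+d-6)*y - 4*d - 4)" using B by simp
  have le: "(d^2*(d+3)*(d*x+3*y) - 4*(d+1)*(d+2))*((d^2-1)*(d^2-4)) \<le> (d^2*(d^2*x-4)+4)*Pd d"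
    using key KB by linarith
  show ?thesis unfolding aF_def bF_def by (rule frac_leI[OF Pd_pos[OF d2] Q_pos[OF d] le])
qed



lemma frac_le2: "0 < (b::real) \<Longrightarrow> 0 < c \<Longrightarrow> p \<le> q*c \<Longrightarrow> p/(c*b) \<le> q/b"
  by (simp add: divide_simps mult.commute mult.left_commute)
lemma frac_le3: "0 < (b::real) \<Longrightarrow> 0 < c \<Longrightarrow> q*c \<le> p \<Longrightarrow> q/b \<le> p/(c*b)"
  by (simp add: divide_simps mult.commute mult.left_commute)

lemma Pdd: "2 \<le> e \<Longrightarrow> 0 < (e*e-1)*(e+2)*(e+(4::real))"
  using Pd_pos[of e] by (simp add: Pd_def power2_eq_square)
lemma Qd: "4 \<le> e \<Longrightarrow> 0 < (e*e-1)*(e*e-(4::real))"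
  using Q_pos[of e] by (simp add: power2_eq_square)

lemma aF_dd: "aF d x y = (d*d*(d+3)*(d*x+3*y) - 4*(d+1)*(d+2)) / ((d*d-1)*(d+2)*(d+4))"
  by (simp add: aF_def Pd_def power2_eq_square)
lemma bF_dd: "bF d x = (d*d*(d*d*x-4)+4)/((d*d-1)*(d*d-4))"
  by (simp add: bF_def power2_eq_square)
lemma b1_dd: "b1 d = (3*d*d-4)/(4*(d*d-1))"
  by (simp add: b1_def power2_eq_square)
lemma a1_dd: "2 \<le> d \<Longrightarrow> aF d (3/4) (1/2) = (3*d*d-3*d-4)/(4*(d*d-1))"
  using a1_eq[of d] by (simp add: power2_eq_square)

lemma aF_step:
  assumes d: "4 \<le> d" and G: "0 \<le> d*d*(3*d+1)*x - 3*d*(d*d-3*d-2)*y - 4*(d+1)*(d+2)"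
  shows "aF d (3/4) (1/2) * aF d x y \<le> aF d (3/4*x) (1/2*y)"
proof -
  have d2: "2 \<le> d" using d by simp
  have c: "0 < 4*(d*d-1)" using d mult_mono[of 4 d 4 d] by simp
  have key: "(d*d*(d+3)*(d*(3/4*x)+3*(1/2*y)) - 4*(d+1)*(d+2))*(4*(d*d-1))
     - (3*d*d-3*d-4)*(d*d*(d+3)*(d*x+3*y) - 4*(d+1)*(d+2))
     = d*(d+3)*(d*d*(3*d+1)*x - 3*d*(d*d-3*d-2)*y - 4*(d+1)*(d+2))" by algebra
  have "0 \<le> d*(d+3)*(d*d*(3*d+1)*x - 3*d*(d*d-3*d-2)*y - 4*(d+1)*(d+2))"
    using d G by simp
  then have le: "(3*d*d-3*d-4)*(d*d*(d+3)*(d*x+3*y) - 4*(d+1)*(d+2))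
     \<le> (d*d*(d+3)*(d*(3/4*x)+3*(1/2*y)) - 4*(d+1)*(d+2))*(4*(d*d-1))"
    using key by linarith
  show ?thesis unfolding a1_dd[OF d2] unfolding aF_dd times_divide_times_eq
    by (rule frac_le2[OF Pdd[OF d2] c le])
qed

lemma bF_step:
  assumes d: "4 \<le> d" and x: "0 \<le> x" "x \<le> 3/4"
  shows "bF d (3/4*x) \<le> b1 d * bF d x"
proof -
  have c: "0 < 4*(d*d-1)" using d mult_mono[of 4 d 4 d] by simp
  have dd: "16 \<le> d*d" using d mult_mono[of 4 d 4 d] by simp
  have key: "(3*d*d-4)*(d*d*(d*d*x-4)+4) - (d*d*(d*d*(3/4*x)-4)+4)*(4*(d*d-1))
      = d*d*(d*d*(4-x)-4)" by algebra
  have "16*(13/4) \<le> d*d*(4-x)" using dd x by (intro mult_mono) auto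
  then have "0 \<le> d*d*(d*d*(4-x)-4)" using dd by simp
  then have le: "(d*d*(d*d*(3/4*x)-4)+4)*(4*(d*d-1)) \<le> (3*d*d-4)*(d*d*(d*d*x-4)+4)"
    using key by linarith
  show ?thesis unfolding b1_dd bF_dd times_divide_times_eq
    by (rule frac_le3[OF Qd[OF d] c le])
qed

lemma aF_mono_k:
  assumes d: "2 \<le> d" and x: "0 \<le> x" and y: "0 \<le> y"
  shows "aF d (3/4*x) (1/2*y) \<le> aF d x y"
proof -
  have key: "(d^2*(d+3)*(d*x+3*y) - 4*(d+1)*(d+2)) - (d^2*(d+3)*(d*(3/4*x)+3*(1/2*y)) - 4*(d+1)*(d+2))
     = d^2*(d+3)*(1/4*(d*x)+3/2*y)" by algebra
  have "0 \<le> d^2*(d+3)*(1/4*(d*x)+3/2*y)" using d x y by simp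
  then have "d^2*(d+3)*(d*(3/4*x)+3*(1/2*y)) - 4*(d+1)*(d+2) \<le> d^2*(d+3)*(d*x+3*y) - 4*(d+1)*(d+2)"
    using key by linarith
  then show ?thesis unfolding aF_def using Pd_pos[OF d] by (simp add: divide_right_mono)
qed

lemma bF_mono_k:
  assumes d: "4 \<le> d" and x: "0 \<le> x"
  shows "bF d (3/4*x) \<le> bF d x"
proof -
  have key: "(d^2*(d^2*x-4)+4) - (d^2*(d^2*(3/4*x)-4)+4) = 1/4*(d^2*d^2*x)" by algebra
  have "0 \<le> 1/4*(d^2*d^2*x)" using x by simp
  then have "d^2*(d^2*(3/4*x)-4)+4 \<le> d^2*(d^2*x-4)+4" using key by linarith
  then show ?thesis unfolding bF_def using Q_pos[OF d] by (simp add: divide_right_mono)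
qed

definition pA :: "real \<Rightarrow> real" where "pA e = e*e*e*(e+3)/((e*e-1)*(e+2)*(e+4))"
definition pB :: "real \<Rightarrow> real" where "pB e = 3*(e*e)*(e+3)/((e*e-1)*(e+2)*(e+4))"
definition pC :: "real \<Rightarrow> real" where "pC e = 4*(e+1)*(e+2)/((e*e-1)*(e+2)*(e+4))"
definition pAB :: "real \<Rightarrow> real" where
  "pAB e = (e*e*e*(e+3) + 4/9*(3*(e*e)*(e+3)))/((e*e-1)*(e+2)*(e+4))"

lemma aF_split: "aF e x y = x*pA e + y*pB e - pC e"
proof -
  have "x*pA e + y*pB e - pC e = (x*(e*e*e*(e+3)) + y*(3*(e*e)*(e+3)) - 4*(e+1)*(e+2))/((e*e-1)*(e+2)*(e+4))"
    unfolding pA_def pB_def pC_def by (simp add: add_divide_distrib diff_divide_distrib)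
  also have "x*(e*e*e*(e+3)) + y*(3*(e*e)*(e+3)) - 4*(e+1)*(e+2) = e*e*(e+3)*(e*x+3*y) - 4*(e+1)*(e+2)"
    by algebra
  finally show ?thesis unfolding aF_dd by simp
qed

lemma pAB_eq: "pAB e = pA e + 4/9*pB e"
  unfolding pAB_def pA_def pB_def by (simp add: add_divide_distrib)

lemma lin1: "a + c*b \<le> a' + c*b' \<Longrightarrow> 0 \<le> (a' - a) + c*(b' - (b::real))"
  by (simp add: algebra_simps)
lemma lin2: "X = (x - c)*p + B \<Longrightarrow> Y = (x-c)*q + B' \<Longrightarrow> Y - X = (x-c)*(q - p) + (B' - (B::real))"
  by (simp add: algebra_simps)

lemma comb: "0 \<le> (x::real) \<Longrightarrow> y \<le> c*x \<Longrightarrow> u \<le> 0 \<Longrightarrow> 0 \<le> v + c*u \<Longrightarrow> 0 \<le> w \<Longrightarrow> 0 \<le> x*v + y*u + w"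
proof -
  assume a: "0 \<le> x" "y \<le> c*x" "u \<le> 0" "0 \<le> v + c*u" "0 \<le> w"
  have "(c*x)*u \<le> y*u" using a by (intro mult_right_mono_neg) auto
  moreover have "0 \<le> x*(v + c*u)" using a by simp
  ultimately show ?thesis using a by (simp add: algebra_simps)
qed

lemma aF_mono_d:
  assumes d: "4 \<le> d" and x: "0 \<le> x" and y: "y \<le> 4/9*x"
  shows "aF d x y \<le> aF (2*d) x y"
proof -
  have d2: "2 \<le> d" and e2: "2 \<le> 2*d" using d by auto
  have F1: "pB (2*d) \<le> pB d" unfolding pB_def by (rule frac_leI[OF Pdd[OF e2] Pdd[OF d2] polyF1[OF d]])
  have F2: "pAB d \<le> pAB (2*d)" unfolding pAB_def by (rule frac_leI[OF Pdd[OF d2] Pdd[OF e2] polyF2[OF d]])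
  have F3: "pC (2*d) \<le> pC d" unfolding pC_def by (rule frac_leI[OF Pdd[OF e2] Pdd[OF d2] polyF3[OF d2]])
  have v: "0 \<le> (pA (2*d) - pA d) + 4/9*(pB (2*d) - pB d)" using F2 unfolding pAB_eq by (rule lin1)
  have "0 \<le> x*(pA (2*d) - pA d) + y*(pB (2*d) - pB d) + (pC d - pC (2*d))"
    using F1 F3 by (intro comb[OF x y _ v]) auto
  moreover have "aF (2*d) x y - aF d x y = x*(pA (2*d) - pA d) + y*(pB (2*d) - pB d) + (pC d - pC (2*d))"
    unfolding aF_split by (simp add: algebra_simps)
  ultimately show ?thesis by linarith
qed

definition pD :: "real \<Rightarrow> real" where "pD e = e*e*e*e/((e*e-1)*(e*e-4))"

lemma bF_split: "bF e x = (x - 9/16)*pD e + bF e (9/16)"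
proof -
  have "(x - 9/16)*pD e + bF e (9/16) = ((x - 9/16)*(e*e*e*e) + (e*e*(e*e*(9/16)-4)+4))/((e*e-1)*(e*e-4))"
    unfolding pD_def bF_dd by (simp add: add_divide_distrib)
  also have "(x - 9/16)*(e*e*e*e) + (e*e*(e*e*(9/16)-4)+4) = e*e*(e*e*x-4)+4" by algebra
  finally show ?thesis unfolding bF_dd by simp
qed

lemma bF_mono_d:
  assumes d: "4 \<le> d" and x: "x \<le> 9/16"
  shows "bF d x \<le> bF (2*d) x"
proof -
  have e4: "4 \<le> 2*d" using d by auto
  have G1: "pD (2*d) \<le> pD d" unfolding pD_def by (rule frac_leI[OF Qd[OF e4] Qd[OF d] polyG1[OF d]])
  have G2: "bF d (9/16) \<le> bF (2*d) (9/16)" unfolding bF_dd by (rule frac_leI[OF Qd[OF d] Qd[OF e4] polyG2[OF d]])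
  have "0 \<le> (x - 9/16)*(pD (2*d) - pD d)" using G1 x by (intro mult_nonpos_nonpos) auto
  moreover have "bF (2*d) x - bF d x = (x - 9/16)*(pD (2*d) - pD d) + (bF (2*d) (9/16) - bF d (9/16))"
    by (rule lin2[OF bF_split bF_split])
  ultimately show ?thesis using G2 by linarith
qed

lemma a1_mono_d: "2 \<le> d \<Longrightarrow> aF d (3/4) (1/2) \<le> aF (2*d) (3/4) (1/2)"
proof -
  assume d2: "2 \<le> d"
  then have e2: "2 \<le> 2*d" by simp
  have c1: "0 < 4*(d*d-1)" using d2 mult_mono[of 2 d 2 d] by simp
  have c2: "0 < 4*((2*d)*(2*d)-1)" using d2 mult_mono[of 2 d 2 d] by simp
  show ?thesis unfolding a1_dd[OF d2] a1_dd[OF e2] by (rule frac_leI[OF c1 c2 polyH1[OF d2]])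
qed

lemma b1_mono_d: "2 \<le> d \<Longrightarrow> b1 d \<le> b1 (2*d)"
proof -
  assume d2: "2 \<le> d"
  have c1: "0 < 4*(d*d-1)" using d2 mult_mono[of 2 d 2 d] by simp
  have c2: "0 < 4*((2*d)*(2*d)-1)" using d2 mult_mono[of 2 d 2 d] by simp
  show ?thesis unfolding b1_dd by (rule frac_leI[OF c1 c2 polyH2[OF d2]])
qed



lemma gS: "gam^(Suc m) = 3/4*gam^m" by (simp add: gam_def)
lemma nS: "nuu^(Suc m) = 1/2*nuu^m" by (simp add: nuu_def)
lemma g1: "gam = 3/4" "nuu = 1/2" by (simp_all add: gam_def nuu_def)

lemma alph1: "alph n 1 = aF (dim n) (3/4) (1/2)"
  by (simp add: alph_eq g1)
lemma bet1: "bet n 1 = b1 (dim n)"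
  by (simp add: bet_eq)

lemma alph_bounds:
  assumes "1 \<le> k" "k \<le> n"
  shows "0 < alph n k \<and> alph n k < gam^k"
  using aF_pos[OF basics(1,7,2)[OF assms]] aF_lt[OF basics(1,3,4)[OF assms] less_imp_le[OF basics(5)[OF assms]] basics(6)[OF assms]]
  unfolding alph_eq by simp

lemma bet_bounds:
  assumes "1 \<le> k" "k \<le> n"
  shows "0 < bet n k \<and> bet n k < gam^k"
proof (cases "k = 1")
  case True
  then show ?thesis using b1_bounds[OF basics(1)[OF assms]] unfolding bet_eq by (simp add: g1)
next
  case False
  then have k2: "2 \<le> k" using assms by simp
  show ?thesis using bF_bounds[OF basics2(1)[OF k2 assms(2)] basics(3)[OF assms] basics2(2)[OF k2 assms(2)] basics(7)[OF assms]]
    unfolding bet_eq using False by simp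
qed

lemma alph_le_bet:
  assumes "1 \<le> k" "k \<le> n"
  shows "alph n k \<le> bet n k"
proof (cases "k = 1")
  case True
  have d: "2 \<le> dim n" using basics(1)[OF assms] .
  have "(3*dim n^2-3*dim n-4)/(4*(dim n^2-1)) \<le> (3*dim n^2-4)/(4*(dim n^2-1))"
    using d by (intro divide_right_mono) auto
  then show ?thesis unfolding True alph1 bet1 a1_eq[OF d] b1_def by simp
next
  case False
  then have k2: "2 \<le> k" using assms by simp
  show ?thesis unfolding alph_eq bet_eq using False
    aF_le_bF[OF basics2(1)[OF k2 assms(2)] basics2(3)[OF k2 assms(2)] less_imp_le[OF basics(5)[OF assms]] basics(2)[OF assms]]
    by simp
qed

lemma G_pos2:
  fixes d x y :: real
  assumes d: "4 \<le> d" and x: "9/4*y \<le> x" and y: "0 \<le> y" "2 \<le> d*y"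
  shows "0 \<le> d*d*(3*d+1)*x - 3*d*(d*d-3*d-2)*y - 4*(d+1)*(d+2)"
proof -
  define R where "R = 15/4*(d*d) + 45/4*d + 6"
  have R: "0 \<le> R" using d by (simp add: R_def)
  have c: "0 \<le> d*d*(3*d+1)" using d by simp
  have h1: "(d*d*(3*d+1))*(9/4*y) \<le> (d*d*(3*d+1))*x" using x by (intro mult_left_mono[OF _ c])
  have e: "(d*d*(3*d+1))*(9/4*y) - 3*d*(d*d-3*d-2)*y = (d*y)*R" unfolding R_def by algebra
  have h2: "2*R \<le> (d*y)*R" using y R by (intro mult_right_mono) auto
  have "4*(d+1)*(d+2) = 4*(d*d) + 12*d + 8" by algebra
  moreover have "2*R = 15/2*(d*d) + 45/2*d + 12" unfolding R_def by algebra
  moreover have "0 \<le> d*d" by simp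
  ultimately show ?thesis using h1 e h2 d by linarith
qed

lemma alph_pow:
  assumes "1 \<le> k" "k \<le> n"
  shows "alph n 1 ^ k \<le> alph n k"
  using assms
proof (induct k rule: dec_induct)
  case base
  then show ?case by simp
next
  case (step m)
  have m1: "1 \<le> m" and mn: "m \<le> n" and Sn: "Suc m \<le> n" using step by auto
  have d4: "4 \<le> dim n" using basics3(2)[OF Sn m1] .
  have G: "0 \<le> dim n*dim n*(3*dim n+1)*gam^m - 3*dim n*(dim n*dim n-3*dim n-2)*nuu^m - 4*(dim n+1)*(dim n+2)"
  proof (cases "m = 1")
    case True
    show ?thesis using polyE1[OF d4] True by (simp add: g1)
  next
    case False
    then have "2 \<le> m" using m1 by simp
    show ?thesis using G_pos2[OF d4 basics2(3)[OF \<open>2 \<le> m\<close> mn] less_imp_le[OF basics(5)[OF m1 mn]] basics3(1)[OF Sn m1]] .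
  qed
  have a0: "0 \<le> alph n 1" using alph_bounds[of 1 n] mn m1 by simp
  have "alph n 1 ^ Suc m = alph n 1 * alph n 1 ^ m" by simp
  also have "\<dots> \<le> alph n 1 * alph n m" using step(3)[OF mn] a0 by (intro mult_left_mono)
  also have "\<dots> \<le> alph n (Suc m)" unfolding alph1 alph_eq[of n m] alph_eq[of n "Suc m"] gS nS
    by (rule aF_step[OF d4 G])
  finally show ?case .
qed

lemma bet_is_bF: "1 \<le> k \<Longrightarrow> 4 \<le> dim n \<Longrightarrow> bet n k = bF (dim n) (gam^k)"
  unfolding bet_eq using b1_bF[of "dim n"] by (auto simp: g1)

lemma bet_pow:
  assumes "1 \<le> k" "k \<le> n"
  shows "bet n k \<le> bet n 1 ^ k"
  using assms
proof (induct k rule: dec_induct)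
  case base
  then show ?case by simp
next
  case (step m)
  have m1: "1 \<le> m" and mn: "m \<le> n" and Sn: "Suc m \<le> n" using step by auto
  have d4: "4 \<le> dim n" using basics3(2)[OF Sn m1] .
  have b0: "0 \<le> bet n 1" using bet_bounds[of 1 n] mn m1 by simp
  have "bet n (Suc m) = bF (dim n) (gam^(Suc m))" using bet_is_bF[of "Suc m" n] d4 by simp
  also have "\<dots> = bF (dim n) (3/4*gam^m)" by (simp only: gS)
  also have "\<dots> \<le> b1 (dim n) * bF (dim n) (gam^m)"
    by (rule bF_step[OF d4 less_imp_le[OF basics(3)[OF m1 mn]] basics(4)[OF m1 mn]])
  also have "\<dots> = bet n 1 * bet n m" using bet_is_bF[OF m1 d4] bet1 by simp
  also have "\<dots> \<le> bet n 1 * bet n 1 ^ m" using step(3)[OF mn] b0 by (intro mult_left_mono)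
  finally show ?case by simp
qed

lemma mono_k:
  assumes "1 \<le> k" "k \<le> k'" "k' \<le> n"
  shows "alph n k' \<le> alph n k \<and> bet n k' \<le> bet n k"
  using assms(2,3)
proof (induct k' rule: dec_induct)
  case base
  then show ?case by simp
next
  case (step m)
  have m1: "1 \<le> m" and mn: "m \<le> n" and Sn: "Suc m \<le> n" using step assms(1) by auto
  have d4: "4 \<le> dim n" using basics3(2)[OF Sn m1] .
  have "alph n (Suc m) \<le> alph n m" unfolding alph_eq gS nS
    by (rule aF_mono_k[OF basics(1)[OF m1 mn] less_imp_le[OF basics(3)[OF m1 mn]] less_imp_le[OF basics(5)[OF m1 mn]]])
  moreover have "bet n (Suc m) \<le> bet n m"
  proof -
    have "bet n (Suc m) = bF (dim n) (gam^(Suc m))" using bet_is_bF[of "Suc m" n] d4 by simp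
    also have "\<dots> = bF (dim n) (3/4*gam^m)" by (simp only: gS)
    also have "\<dots> \<le> bF (dim n) (gam^m)" by (rule bF_mono_k[OF d4 less_imp_le[OF basics(3)[OF m1 mn]]])
    finally show ?thesis unfolding bet_is_bF[OF m1 d4] .
  qed
  ultimately show ?case using step(3)[OF mn] by linarith
qed

lemma mono_d:
  assumes "1 \<le> k" "k \<le> n" "n \<le> n'"
  shows "alph n k \<le> alph n' k \<and> bet n k \<le> bet n' k"
  using assms(3)
proof (induct n' rule: dec_induct)
  case base
  then show ?case by simp
next
  case (step m)
  have km: "k \<le> m" using step assms by simp
  have d2: "2 \<le> dim m" using basics(1)[OF assms(1) km] .
  have "alph m k \<le> alph (Suc m) k \<and> bet m k \<le> bet (Suc m) k"
  proof (cases "k = 1")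
    case True
    then show ?thesis unfolding True alph1 bet1 dim_Suc using a1_mono_d[OF d2] b1_mono_d[OF d2] by simp
  next
    case False
    then have k2: "2 \<le> k" using assms by simp
    have d4: "4 \<le> dim m" using basics2(1)[OF k2 km] .
    have y: "nuu^k \<le> 4/9*gam^k" using basics2(3)[OF k2 km] by simp
    have "alph m k \<le> alph (Suc m) k" unfolding alph_eq dim_Suc
      by (rule aF_mono_d[OF d4 less_imp_le[OF basics(3)[OF assms(1) km]] y])
    moreover have "bet m k \<le> bet (Suc m) k" unfolding bet_eq dim_Suc using False
      bF_mono_d[OF d4 basics2(2)[OF k2 km]] by simp
    ultimately show ?thesis by simp
  qed
  then show ?case using step(3) by linarith
qed



lemma aF_t:
  fixes d x y :: real assumes d: "2 \<le> d"
  shows "aF d x y = ((1+3*(1/d))*(x+3*y*(1/d)) - 4*(1/d)^2*(1+(1/d))*(1+2*(1/d)))/((1-(1/d)^2)*(1+2*(1/d))*(1+4*(1/d)))"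
proof -
  have d0: "d \<noteq> 0" using d by simp
  have n: "(1+3*(1/d))*(x+3*y*(1/d)) - 4*(1/d)^2*(1+(1/d))*(1+2*(1/d)) = (d^2*(d+3)*(d*x+3*y) - 4*(d+1)*(d+2)) / d^4"
    using d0 by (simp add: field_simps power2_eq_square) (simp add: algebra_simps eval_nat_numeral)
  have p: "(1-(1/d)^2)*(1+2*(1/d))*(1+4*(1/d)) = Pd d / d^4"
    using d0 unfolding Pd_def by (simp add: field_simps power2_eq_square) (simp add: algebra_simps eval_nat_numeral)
  show ?thesis unfolding n p aF_def using d0 by simp
qed

lemma bF_t:
  fixes d x :: real assumes d: "2 \<le> d"
  shows "bF d x = (x - 4*(1/d)^2 + 4*(1/d)^4)/((1-(1/d)^2)*(1-4*(1/d)^2))"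
proof -
  have d0: "d \<noteq> 0" using d by simp
  have n: "x - 4*(1/d)^2 + 4*(1/d)^4 = (d^2*(d^2*x-4)+4) / d^4"
    using d0 by (simp add: field_simps power2_eq_square) (simp add: algebra_simps eval_nat_numeral)
  have p: "(1-(1/d)^2)*(1-4*(1/d)^2) = ((d^2-1)*(d^2-4)) / d^4"
    using d0 by (simp add: field_simps power2_eq_square) (simp add: algebra_simps eval_nat_numeral)
  show ?thesis unfolding n p bF_def using d0 by simp
qed

lemma b1_t:
  fixes d :: real assumes d: "2 \<le> d"
  shows "b1 d = (3 - 4*(1/d)^2)/(4*(1-(1/d)^2))"
proof -
  have d0: "d \<noteq> 0" using d by simp
  have n: "3 - 4*(1/d)^2 = (3*d^2-4) / d^2"
    using d0 by (simp add: field_simps power2_eq_square)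
  have p: "4*(1-(1/d)^2) = (4*(d^2-1)) / d^2"
    using d0 by (simp add: field_simps power2_eq_square)
  show ?thesis unfolding n p b1_def using d0 by simp
qed

lemma dim_inv: "1/dim m = (1/2)^m" by (simp add: dim_def power_one_over)

lemma dim_ge: "1 \<le> m \<Longrightarrow> 2 \<le> dim m"
proof -
  assume "1 \<le> m"
  then have "(2::real)^1 \<le> 2^m" by (intro power_increasing) auto
  then show ?thesis by (simp add: dim_def)
qed

lemma t0: "(\<lambda>m. (1/2::real)^m) \<longlonglongrightarrow> 0" by (rule LIMSEQ_realpow_zero) auto

lemma lim_alph: "(\<lambda>m. alph m k) \<longlonglongrightarrow> gam^k"
proof -
  define x y where "x = gam^k" and "y = nuu^k"
  define F where "F = (\<lambda>t::real. ((1+3*t)*(x+3*y*t) - 4*t^2*(1+t)*(1+2*t))/((1-t^2)*(1+2*t)*(1+4*t)))"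
  have c: "isCont F 0" unfolding F_def by (intro continuous_intros) auto
  have l: "(\<lambda>m. F ((1/2)^m)) \<longlonglongrightarrow> F 0" by (rule isCont_tendsto_compose[OF c t0])
  have F0: "F 0 = gam^k" by (simp add: F_def x_def)
  have ev: "eventually (\<lambda>m. F ((1/2)^m) = alph m k) sequentially"
    unfolding eventually_sequentially
  proof (intro exI allI impI)
    fix m :: nat assume "1 \<le> m"
    then show "F ((1/2)^m) = alph m k" unfolding alph_eq aF_t[OF dim_ge[OF \<open>1 \<le> m\<close>]] dim_inv F_def x_def y_def
      by simp
  qed
  show ?thesis using l ev F0 tendsto_cong by fastforce
qed

lemma lim_bet: "(\<lambda>m. bet m k) \<longlonglongrightarrow> gam^k"
proof (cases "k = 1")
  case True
  define F where "F = (\<lambda>t::real. (3 - 4*t^2)/(4*(1-t^2)))"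
  have c: "isCont F 0" unfolding F_def by (intro continuous_intros) auto
  have l: "(\<lambda>m. F ((1/2)^m)) \<longlonglongrightarrow> F 0" by (rule isCont_tendsto_compose[OF c t0])
  have F0: "F 0 = gam^k" by (simp add: F_def True gam_def)
  have ev: "eventually (\<lambda>m. F ((1/2)^m) = bet m k) sequentially"
    unfolding eventually_sequentially
  proof (intro exI allI impI)
    fix m :: nat assume "1 \<le> m"
    then show "F ((1/2)^m) = bet m k" unfolding True bet1 b1_t[OF dim_ge[OF \<open>1 \<le> m\<close>]] dim_inv F_def
      by simp
  qed
  show ?thesis using l ev F0 tendsto_cong by fastforce
next
  case False
  define x where "x = gam^k"
  define F where "F = (\<lambda>t::real. (x - 4*t^2 + 4*t^4)/((1-t^2)*(1-4*t^2)))"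
  have c: "isCont F 0" unfolding F_def by (intro continuous_intros) auto
  have l: "(\<lambda>m. F ((1/2)^m)) \<longlonglongrightarrow> F 0" by (rule isCont_tendsto_compose[OF c t0])
  have F0: "F 0 = gam^k" by (simp add: F_def x_def)
  have ev: "eventually (\<lambda>m. F ((1/2)^m) = bet m k) sequentially"
    unfolding eventually_sequentially
  proof (intro exI allI impI)
    fix m :: nat assume "1 \<le> m"
    then show "F ((1/2)^m) = bet m k" unfolding bet_eq using False
      unfolding bF_t[OF dim_ge[OF \<open>1 \<le> m\<close>]] dim_inv F_def x_def by simp
  qed
  show ?thesis using l ev F0 tendsto_cong by fastforce
qed

lemma powdiff:
  fixes a b c :: real
  assumes "0 \<le> a" "a \<le> b" "b \<le> c"
  shows "c*(b^m - a^m) \<le> real m*(b-a)*c^m"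
proof (induct m)
  case 0
  then show ?case by simp
next
  case (Suc m)
  have c0: "0 \<le> c" "0 \<le> b" using assms by linarith+
  have nn: "0 \<le> real m*(b-a)*c^m" using assms c0 by simp
  have s1: "b*(c*(b^m - a^m)) \<le> b*(real m*(b-a)*c^m)" using Suc c0 by (intro mult_left_mono)
  have s2: "b*(real m*(b-a)*c^m) \<le> c*(real m*(b-a)*c^m)" using nn assms by (intro mult_right_mono)
  have am: "a^m \<le> c^m" using assms by (intro power_mono) auto
  have s3: "c*(a^m*(b-a)) \<le> c*(c^m*(b-a))" using am assms c0 by (intro mult_left_mono mult_right_mono) auto
  have e1: "c*(b^Suc m - a^Suc m) = b*(c*(b^m - a^m)) + c*(a^m*(b-a))" by (simp add: algebra_simps)
  have e2: "real (Suc m)*(b-a)*c^Suc m = c*(real m*(b-a)*c^m) + c*(c^m*(b-a))" by (simp add: algebra_simps)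
  show ?case using e1 e2 s1 s2 s3 by linarith
qed

lemma chain:
  assumes k: "1 \<le> k" "k \<le> n"
  shows "gam ^ (k * l) * (1 - real (k * l) * (3 * dim n + 1) / (3 * ((dim n)^2 - 1)))
        \<le> alph n 1 ^ (k * l)
    \<and> alph n 1 ^ (k * l) \<le> alph n k ^ l
    \<and> alph n k ^ l \<le> bet n k ^ l
    \<and> bet n k ^ l \<le> bet n 1 ^ (k * l)
    \<and> bet n 1 ^ (k * l) \<le> alph n 1 ^ (k * l) + real (k * l) * dim n / ((dim n)^2 - 1) * gam ^ (k * l)"
proof -
  define d where "d = dim n"
  define m where "m = k*l"
  have n1: "1 \<le> n" using k by simp
  have d2: "2 \<le> d" unfolding d_def using dim_ge[OF n1] .
  have dd: "4 \<le> d^2" using d2 power_mono[of 2 d 2] by simp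
  have dn: "d^2 - 1 \<noteq> 0" using dd by simp
  define del where "del = (3*d+1)/(3*(d^2-1))"
  have a1': "alph n 1 = (3*d^2-3*d-4)/(4*(d^2-1))" using a1_eq[OF d2] unfolding alph1 d_def by simp
  have a1: "alph n 1 = gam*(1 - del)"
    unfolding a1' del_def g1 using dn
    by (simp add: field_simps)
  have "2*d \<le> d^2" using d2 mult_right_mono[of 2 d d] by (simp add: power2_eq_square)
  then have "3*d+1 \<le> 3*(d^2-1)" using d2 by simp
  then have del1: "del \<le> 1" unfolding del_def using dd by (simp add: divide_le_eq_1)
  have ab1: "0 < alph n 1 \<and> alph n 1 < gam" using alph_bounds[OF order_refl n1] by simp
  have abk: "0 < alph n k \<and> alph n k < gam^k" using alph_bounds[OF k] .
  have bb1: "0 < bet n 1 \<and> bet n 1 < gam" using bet_bounds[OF order_refl n1] by simp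
  have bbk: "0 < bet n k \<and> bet n k < gam^k" using bet_bounds[OF k] .
  have "1 + real m * (- del) \<le> (1 + - del)^m" using del1 by (intro Bernoulli_inequality) simp
  then have "gam^m * (1 - real m * del) \<le> gam^m * (1 - del)^m"
    by (intro mult_left_mono) (auto simp: gam_def)
  then have i: "gam^m * (1 - real m * (3*d+1)/(3*(d^2-1))) \<le> alph n 1 ^ m"
    unfolding a1 power_mult_distrib del_def by simp
  have "alph n 1 ^ k \<le> alph n k" using alph_pow[OF k] .
  then have ii: "alph n 1 ^ m \<le> alph n k ^ l" unfolding m_def power_mult
    using ab1 by (intro power_mono) auto
  have iii: "alph n k ^ l \<le> bet n k ^ l" using alph_le_bet[OF k] abk by (intro power_mono) auto
  have iv: "bet n k ^ l \<le> bet n 1 ^ m" unfolding m_def power_mult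
    using bet_pow[OF k] bbk by (intro power_mono) auto
  have ab: "alph n 1 \<le> bet n 1" using alph_le_bet[OF order_refl n1] .
  have dif: "bet n 1 - alph n 1 = gam*(d/(d^2-1))"
    unfolding a1' bet1 d_def[symmetric] b1_def g1
    by (simp add: diff_divide_distrib[symmetric])
  have pd: "gam*(bet n 1 ^ m - alph n 1 ^ m) \<le> real m*(bet n 1 - alph n 1)*gam^m"
    using ab1 ab bb1 by (intro powdiff) auto
  then have "gam*(bet n 1 ^ m - alph n 1 ^ m) \<le> gam*(real m*(d/(d^2-1))*gam^m)"
    unfolding dif by (simp add: algebra_simps)
  then have "bet n 1 ^ m - alph n 1 ^ m \<le> real m*(d/(d^2-1))*gam^m"
    by (rule mult_left_le_imp_le) (simp add: gam_def)
  then have v: "bet n 1 ^ m \<le> alph n 1 ^ m + real m * d / (d^2 - 1) * gam^m" by simp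
  show ?thesis using i ii iii iv v unfolding m_def d_def by simp
qed


theorem mainTheorem12:
  fixes n k l :: nat
  assumes "1 \<le> k" and "k \<le> n"
  shows "(\<forall>n'. n \<le> n' \<longrightarrow> alph n k \<le> alph n' k \<and> bet n k \<le> bet n' k)
    \<and> (\<forall>k'. k \<le> k' \<and> k' \<le> n \<longrightarrow> alph n k' \<le> alph n k \<and> bet n k' \<le> bet n k)
    \<and> (\<lambda>m. alph m k) \<longlonglongrightarrow> gam ^ k
    \<and> (\<lambda>m. bet m k) \<longlonglongrightarrow> gam ^ k
    \<and> 0 < alph n k \<and> alph n k < gam ^ k
    \<and> 0 < bet n k \<and> bet n k < gam ^ k
    \<and> gam ^ (k * l) * (1 - real (k * l) * (3 * dim n + 1) / (3 * ((dim n)^2 - 1)))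
        \<le> alph n 1 ^ (k * l)
    \<and> alph n 1 ^ (k * l) \<le> alph n k ^ l
    \<and> alph n k ^ l \<le> bet n k ^ l
    \<and> bet n k ^ l \<le> bet n 1 ^ (k * l)
    \<and> bet n 1 ^ (k * l) \<le> alph n 1 ^ (k * l) + real (k * l) * dim n / ((dim n)^2 - 1) * gam ^ (k * l)"
  using mono_d[OF assms] mono_k[OF assms(1)] lim_alph[of k] lim_bet[of k]
    alph_bounds[OF assms] bet_bounds[OF assms] chain[OF assms, of l]
  by blast

end
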